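(* (i) For $(t,x)$ with $0\le t<1$ and $|x|<B^*\sqrt{1-t}$, $\mathcal{L}J^*(t,x)=0$. (ii) For $(t,x)$ with $0\le t<1$ and $|x|>B^*\sqrt{1-t}$, $\mathcal{L}J^*(t,x)\le0$. Here $$J^*(t,x)=\begin{cases}(1-t)^{n+1/2}(F_{2n+1}+G_{2n+1})(x/\sqrt{1-t})\,j(B^* ), & |x|<B^*\sqrt{1-t},\\ g(t,x), & |x|\ge B^*\sqrt{1-t}.\end{cases}$$
   Context: For a function $\xi(t,x)$, $\mathcal{L}\xi=\frac{\partial\xi}{\partial t}-\frac{x}{1-t}\frac{\partial\xi}{\partial x}+\frac12\frac{\partial^2\xi}{\partial x^2}$. $n\ge0$ is an integer. $F_q(y):=\int_0^\infty u^{q-1}e^{yu-u^2/2}\,\mathrm{d}u$ and $G_q(y):=F_q(-y)$. $B^*>0$ is the unique zero of $B\mapsto(2n+1)-BF'_{2n+1}(B)/F_{2n+1}(B)$. $U(t,x)=(1-t)^{n+1/2}(B^* )^{2n+1}F_{2n+1}(x/\sqrt{1-t})/F_{2n+1}(B^* )$ if $x<B^*\sqrt{1-t}$, and $U(t,x)=x^{2n+1}$ otherwise. $g(t,x):=(U(t,x)-x^{2n+1})1_{\{x\le0\}}+(U(t,-x)+x^{2n+1})1_{\{x>0\}}$. $j(D):=\frac{1}{(F_{2n+1}+G_{2n+1})(D)}[D^{2n+1}+(B^* )^{2n+1}G_{2n+1}(D)/F_{2n+1}(B^* )]$. *)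

theory Defs
  imports "HOL-Analysis.Analysis"
begin

definition Fq :: "nat \<Rightarrow> real \<Rightarrow> real" where
  "Fq q y = integral {0..} (\<lambda>u. u ^ (q - 1) * exp (y * u - u\<^sup>2 / 2))"

definition Gq :: "nat \<Rightarrow> real \<Rightarrow> real" where
  "Gq q y = Fq q (- y)"

definition Bstar :: "nat \<Rightarrow> real" where
  "Bstar n = (THE B. B > 0 \<and>
      real (2*n+1) - B * deriv (Fq (2*n+1)) B / Fq (2*n+1) B = 0)"

definition Ufun :: "nat \<Rightarrow> real \<Rightarrow> real \<Rightarrow> real" where
  "Ufun n t x = (if x < Bstar n * sqrt (1 - t)
     then (1 - t) powr (real n + 1/2) * (Bstar n) ^ (2*n+1)
            * Fq (2*n+1) (x / sqrt (1 - t)) / Fq (2*n+1) (Bstar n)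
     else x ^ (2*n+1))"

definition gfun :: "nat \<Rightarrow> real \<Rightarrow> real \<Rightarrow> real" where
  "gfun n t x = (if x \<le> 0 then Ufun n t x - x ^ (2*n+1)
                 else Ufun n t (- x) + x ^ (2*n+1))"

definition jfun :: "nat \<Rightarrow> real \<Rightarrow> real" where
  "jfun n D = (1 / (Fq (2*n+1) D + Gq (2*n+1) D)) *
     (D ^ (2*n+1) + (Bstar n) ^ (2*n+1) * Gq (2*n+1) D / Fq (2*n+1) (Bstar n))"

definition Jstar :: "nat \<Rightarrow> real \<Rightarrow> real \<Rightarrow> real" where
  "Jstar n t x = (if \<bar>x\<bar> < Bstar n * sqrt (1 - t)
     then (1 - t) powr (real n + 1/2)
            * (Fq (2*n+1) (x / sqrt (1 - t)) + Gq (2*n+1) (x / sqrt (1 - t)))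
            * jfun n (Bstar n)
     else gfun n t x)"

definition Lop :: "(real \<Rightarrow> real \<Rightarrow> real) \<Rightarrow> real \<Rightarrow> real \<Rightarrow> real" where
  "Lop \<xi> t x = deriv (\<lambda>s. \<xi> s x) t - x / (1 - t) * deriv (\<lambda>y. \<xi> t y) x
               + 1/2 * deriv (deriv (\<lambda>y. \<xi> t y)) x"

end

theory Submission
  imports Defs
begin


definition fI :: "nat \<Rightarrow> real \<Rightarrow> real \<Rightarrow> real" where
  "fI k y u = u ^ k * exp (y * u - u\<^sup>2 / 2)"

definition II :: "nat \<Rightarrow> real \<Rightarrow> real" where
  "II k y = integral {0..} (fI k y)"

lemma fI_nonneg: "u \<ge> 0 \<Longrightarrow> fI k y u \<ge> 0"
  by (simp add: fI_def)

lemma quad_bound: "a * u - u\<^sup>2 / 2 \<le> a\<^sup>2 / 2" for a u :: real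
proof -
  have "0 \<le> (u - a)\<^sup>2" by simp
  then show ?thesis by (simp add: power2_eq_square algebra_simps)
qed

lemma fI_bound:
  assumes "u \<ge> 0"
  shows "fI k y u \<le> exp ((y + real k + 1)\<^sup>2 / 2) * exp (- 1 * u)"
proof -
  have "u \<le> exp u" using exp_ge_add_one_self[of u] by linarith
  then have "u ^ k \<le> exp u ^ k" using assms by (intro power_mono) auto
  also have "\<dots> = exp (real k * u)" by (simp add: exp_of_nat_mult)
  finally have h: "u ^ k \<le> exp (real k * u)" .
  have "fI k y u \<le> exp (real k * u) * exp (y * u - u\<^sup>2 / 2)"
    unfolding fI_def by (rule mult_right_mono[OF h]) simp
  also have "\<dots> = exp ((y + real k + 1) * u - u\<^sup>2/2) * exp (- 1 * u)"
    by (simp add: exp_add[symmetric] algebra_simps)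
  also have "\<dots> \<le> exp ((y + real k + 1)\<^sup>2 / 2) * exp (- 1 * u)"
    using quad_bound[of "y + real k + 1" u] by (intro mult_right_mono) auto
  finally show ?thesis .
qed

lemma fI_cont: "continuous_on S (fI k y)"
  unfolding fI_def by (intro continuous_intros) auto

lemma fI_integrable: "fI k y integrable_on {0..}"
proof (rule measurable_bounded_by_integrable_imp_integrable_real)
  show "fI k y \<in> borel_measurable (lebesgue_on {0..})"
    by (intro continuous_imp_measurable_on_sets_lebesgue fI_cont) auto
  show "(\<lambda>u. exp ((y + real k + 1)\<^sup>2 / 2) * exp (- 1 * u)) integrable_on {0..}"
    by (intro integrable_on_mult_right integrable_on_exp_minus_to_infinity) auto
  show "\<bar>fI k y u\<bar> \<le> exp ((y + real k + 1)\<^sup>2 / 2) * exp (- 1 * u)" if "u \<in> {0..}" for u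
    using fI_bound[of u k y] fI_nonneg[of u k y] that by auto
qed auto

lemma fI_abs_integrable: "fI k y absolutely_integrable_on {0..}"
  by (rule nonnegative_absolutely_integrable_1[OF fI_integrable]) (auto simp: fI_nonneg)

lemma II_nonneg: "II k y \<ge> 0"
  unfolding II_def by (rule integral_nonneg[OF fI_integrable]) (auto simp: fI_nonneg)

lemma II_pos: "II k y > 0"
proof -
  have c: "exp (- \<bar>y\<bar> * 2 - 2) \<le> fI k y u" if "u \<in> {1..2}" for u
  proof -
    have "1 \<le> u ^ k" using that by (simp add: one_le_power)
    moreover have "exp (- \<bar>y\<bar> * 2 - 2) \<le> exp (y * u - u\<^sup>2 / 2)"
    proof -
      have "\<bar>y * u\<bar> \<le> \<bar>y\<bar> * 2" using that by (simp add: abs_mult mult_left_mono)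
      then have "y * u \<ge> - \<bar>y\<bar> * 2" by linarith
      moreover have "u\<^sup>2 \<le> 4" using that by (auto simp: power2_eq_square intro: order_trans[OF mult_mono[of u 2 u 2]])
      ultimately show ?thesis by simp
    qed
    ultimately show ?thesis unfolding fI_def
      by (metis exp_gt_zero less_eq_real_def mult_le_cancel_right1 order_trans mult.commute mult_right_mono zero_le_one)
  qed
  have "0 < integral {1..2::real} (\<lambda>u::real. exp (- \<bar>y\<bar> * 2 - 2) :: real)" by simp
  also have "\<dots> \<le> integral {1..2} (fI k y)"
    by (rule integral_le[OF _ _ c]) (auto intro: integrable_continuous_interval fI_cont)
  also have "\<dots> \<le> II k y" unfolding II_def
    by (rule integral_subset_le) (auto intro: integrable_continuous_interval fI_cont fI_integrable fI_nonneg)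
  finally show ?thesis .
qed

lemma tendsto_integral_atLeast:
  fixes g :: "real \<Rightarrow> real"
  assumes "g absolutely_integrable_on {a..}"
  shows "((\<lambda>b. integral {a..b} g) \<longlongrightarrow> integral {a..} g) at_top"
proof -
  have 1: "((\<lambda>b. LINT x:{a..b}|lebesgue. g x) \<longlongrightarrow> (LINT x:{a..}|lebesgue. g x)) at_top"
    by (rule tendsto_set_lebesgue_integral_at_top) (use assms in auto)
  have "(LINT x:{a..}|lebesgue. g x) = integral {a..} g"
    using assms by (rule set_lebesgue_integral_eq_integral(2))
  moreover have "\<forall>\<^sub>F b in at_top. (LINT x:{a..b}|lebesgue. g x) = integral {a..b} g"
  proof (rule eventually_at_top_linorderI[of a])
    fix b assume "b \<ge> a"
    have "set_integrable lebesgue {a..b} g"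
      by (rule set_integrable_subset[OF assms]) auto
    then show "(LINT x:{a..b}|lebesgue. g x) = integral {a..b} g"
      by (rule set_lebesgue_integral_eq_integral(2))
  qed
  ultimately show ?thesis using 1 by (simp add: filterlim_cong)
qed

lemma IBP_atLeast0:
  fixes h d :: "real \<Rightarrow> real"
  assumes der: "\<And>u. (h has_real_derivative d u) (at u)"
    and int: "d absolutely_integrable_on {0..}"
    and lim: "(h \<longlongrightarrow> 0) at_top"
  shows "integral {0..} d = - h 0"
proof -
  have "\<forall>\<^sub>F b in at_top. integral {0..b} d = h b - h 0"
  proof (rule eventually_at_top_linorderI[of 0])
    fix b :: real assume "b \<ge> 0"
    have "(d has_integral (h b - h 0)) {0..b}"
      by (rule fundamental_theorem_of_calculus[OF \<open>b \<ge> 0\<close>])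
        (auto simp flip: has_real_derivative_iff_has_vector_derivative
          intro: has_field_derivative_at_within der)
    then show "integral {0..b} d = h b - h 0" by (rule integral_unique)
  qed
  moreover have "((\<lambda>b. h b - h 0) \<longlongrightarrow> 0 - h 0) at_top"
    by (intro tendsto_intros lim)
  ultimately have "((\<lambda>b. integral {0..b} d) \<longlongrightarrow> - h 0) at_top"
    by (simp add: filterlim_cong)
  with tendsto_integral_atLeast[OF int] show ?thesis
    using tendsto_unique by (metis trivial_limit_at_top_linorder)
qed

lemma II_recur0: "II 1 y = y * II 0 y + 1"
proof -
  let ?h = "\<lambda>u::real. exp (y * u - u\<^sup>2 / 2)"
  let ?d = "\<lambda>u. y * fI 0 y u - fI 1 y u"
  have "integral {0..} ?d = - ?h 0"
  proof (rule IBP_atLeast0)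
    show "(?h has_real_derivative ?d u) (at u)" for u
      unfolding fI_def by (auto intro!: derivative_eq_intros simp: algebra_simps)
    show "?d absolutely_integrable_on {0..}"
      by (intro set_integral_diff(1) set_integrable_mult_right fI_abs_integrable)
    show "(?h \<longlongrightarrow> 0) at_top" by real_asymp
  qed
  moreover have "integral {0..} ?d = y * II 0 y - II 1 y"
    unfolding II_def
    by (subst integral_diff) (auto intro: integrable_on_mult_right fI_integrable)
  ultimately show ?thesis by simp
qed

lemma II_recur: "II (Suc (Suc k)) y = y * II (Suc k) y + real (Suc k) * II k y"
proof -
  let ?h = "\<lambda>u::real. u ^ Suc k * exp (y * u - u\<^sup>2 / 2)"
  let ?d = "\<lambda>u. real (Suc k) * fI k y u + y * fI (Suc k) y u - fI (Suc (Suc k)) y u"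
  have "integral {0..} ?d = - ?h 0"
  proof (rule IBP_atLeast0)
    show "(?h has_real_derivative ?d u) (at u)" for u
    proof -
      have d1: "((\<lambda>u. u ^ Suc k) has_real_derivative real (Suc k) * u ^ k) (at u)"
        using DERIV_pow[of "Suc k" u] by simp
      have d2: "((\<lambda>u. exp (y * u - u\<^sup>2 / 2)) has_real_derivative exp (y * u - u\<^sup>2 / 2) * (y - u)) (at u)"
        by (auto intro!: derivative_eq_intros simp: power2_eq_square algebra_simps)
      show ?thesis
        by (rule DERIV_cong[OF DERIV_mult[OF d1 d2]]) (simp add: fI_def algebra_simps)
    qed
    show "?d absolutely_integrable_on {0..}"
      by (intro set_integral_diff(1) set_integral_add(1) set_integrable_mult_right fI_abs_integrable)
    show "(?h \<longlongrightarrow> 0) at_top" by real_asymp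
  qed
  moreover have "integral {0..} ?d = real (Suc k) * II k y + y * II (Suc k) y - II (Suc (Suc k)) y"
    unfolding II_def
    by (subst integral_diff integral_add; auto intro!: integrable_add integrable_on_mult_right fI_integrable)+
  ultimately show ?thesis by simp
qed

lemma exp_taylor_bound: fixes a :: real shows "\<bar>exp a - 1 - a\<bar> \<le> a\<^sup>2 / 2 * exp \<bar>a\<bar>"
proof -
  obtain t where t: "\<bar>t\<bar> \<le> \<bar>a\<bar>" "exp a = (\<Sum>m<2. a ^ m / fact m) + exp t / fact 2 * a ^ 2"
    using Maclaurin_exp_le[of a 2] by blast
  have eq: "exp a - 1 - a = exp t / 2 * a\<^sup>2" using t(2) by (simp add: numeral_2_eq_2)
  have nn: "exp t / 2 * a\<^sup>2 \<ge> 0" by simp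
  have "\<bar>exp a - 1 - a\<bar> = exp t / 2 * a\<^sup>2" by (simp only: eq abs_of_nonneg[OF nn])
  also have "\<dots> \<le> exp \<bar>a\<bar> / 2 * a\<^sup>2" using t(1) by (intro mult_right_mono divide_right_mono) auto
  finally show ?thesis by (simp add: mult.commute)
qed

lemma II_deriv: "(II k has_real_derivative II (Suc k) y) (at y)"
proof -
  define D where "D h u = inverse h * (fI k (y+h) u - fI k y u - h * fI (Suc k) y u)" for h u
  have Dint: "D h integrable_on {0..}" for h
    unfolding D_def
    by (intro integrable_on_mult_right integrable_diff fI_integrable)
  have Deq: "(II k (y+h) - II k y)/h - II (Suc k) y = integral {0..} (D h)" if "h \<noteq> 0" for h
  proof -
    have i1: "integral {0..} (\<lambda>u. fI k (y+h) u - fI k y u) = II k (y+h) - II k y"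
      unfolding II_def by (rule integral_diff) (auto intro: fI_integrable)
    have i2: "integral {0..} (\<lambda>u. (fI k (y+h) u - fI k y u) - h * fI (Suc k) y u)
        = integral {0..} (\<lambda>u. fI k (y+h) u - fI k y u) - integral {0..} (\<lambda>u. h * fI (Suc k) y u)"
      by (rule integral_diff) (auto intro!: integrable_diff integrable_on_mult_right fI_integrable)
    have "integral {0..} (D h) = inverse h * (II k (y+h) - II k y - h * II (Suc k) y)"
      unfolding D_def integral_mult_right using i1 i2 by (simp add: II_def)
    then show ?thesis using that by (simp add: field_simps)
  qed
  have Dbound: "\<bar>D h u\<bar> \<le> \<bar>h\<bar> / 2 * fI (Suc (Suc k)) (y+1) u"
    if "h \<noteq> 0" "\<bar>h\<bar> \<le> 1" "u \<ge> 0" for h u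
  proof -
    have e: "D h u = fI k y u * ((exp (h*u) - 1 - h*u) / h)"
      unfolding D_def fI_def using that(1)
      by (simp add: field_simps exp_add[symmetric])
    have "\<bar>exp (h*u) - 1 - h*u\<bar> \<le> (h*u)\<^sup>2 / 2 * exp \<bar>h*u\<bar>" by (rule exp_taylor_bound)
    also have "\<dots> \<le> (h*u)\<^sup>2 / 2 * exp u"
      using that by (intro mult_left_mono) (auto simp: abs_mult mult_left_le_one_le)
    finally have "\<bar>exp (h*u) - 1 - h*u\<bar> \<le> (h*u)\<^sup>2 / 2 * exp u" .
    then have "\<bar>exp (h*u) - 1 - h*u\<bar> / \<bar>h\<bar> \<le> (h*u)\<^sup>2 / 2 * exp u / \<bar>h\<bar>"
      by (rule divide_right_mono) simp
    also have "(h*u)\<^sup>2 / 2 * exp u / \<bar>h\<bar> = \<bar>h\<bar> * u\<^sup>2 / 2 * exp u"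
    proof -
      have "(h*u)\<^sup>2 = \<bar>h\<bar> * \<bar>h\<bar> * u\<^sup>2" by (simp add: power2_eq_square)
      then show ?thesis using that(1) by (simp add: field_simps)
    qed
    finally have b: "\<bar>(exp (h*u) - 1 - h*u) / h\<bar> \<le> \<bar>h\<bar> * u\<^sup>2 / 2 * exp u"
      by (simp add: abs_divide)
    have "\<bar>D h u\<bar> = fI k y u * \<bar>(exp (h*u) - 1 - h*u) / h\<bar>"
      using e fI_nonneg[OF that(3)] by (simp add: abs_mult)
    also have "\<dots> \<le> fI k y u * (\<bar>h\<bar> * u\<^sup>2 / 2 * exp u)"
      by (rule mult_left_mono[OF b fI_nonneg[OF that(3)]])
    also have "\<dots> = \<bar>h\<bar> / 2 * fI (Suc (Suc k)) (y+1) u"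
      unfolding fI_def by (simp add: field_simps power2_eq_square exp_add[symmetric])
    finally show ?thesis .
  qed
  have "((\<lambda>h. (II k (y+h) - II k y)/h - II (Suc k) y) \<longlongrightarrow> 0) (at 0)"
  proof (rule Lim_null_comparison)
    show "\<forall>\<^sub>F h in at 0. norm ((II k (y+h) - II k y)/h - II (Suc k) y) \<le> \<bar>h\<bar> / 2 * II (Suc (Suc k)) (y+1)"
    proof -
      have "\<forall>\<^sub>F h in at (0::real). h \<noteq> 0 \<and> \<bar>h\<bar> < 1"
        unfolding eventually_at by (rule exI[of _ 1]) auto
      then show ?thesis
      proof (rule eventually_mono)
        fix h :: real assume h: "h \<noteq> 0 \<and> \<bar>h\<bar> < 1"
        have "norm ((II k (y+h) - II k y)/h - II (Suc k) y) = norm (integral {0..} (D h))"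
          using Deq h by simp
        also have "\<dots> \<le> integral {0..} (\<lambda>u. \<bar>h\<bar> / 2 * fI (Suc (Suc k)) (y+1) u)"
          by (rule integral_norm_bound_integral[OF Dint])
            (use h Dbound in \<open>auto intro: integrable_on_mult_right fI_integrable\<close>)
        also have "\<dots> = \<bar>h\<bar> / 2 * II (Suc (Suc k)) (y+1)"
          unfolding II_def by simp
        finally show "norm ((II k (y+h) - II k y)/h - II (Suc k) y) \<le> \<bar>h\<bar> / 2 * II (Suc (Suc k)) (y+1)" .
      qed
    qed
    show "((\<lambda>h::real. \<bar>h\<bar> / 2 * II (Suc (Suc k)) (y+1)) \<longlongrightarrow> 0) (at 0)"
      by (auto intro!: tendsto_eq_intros)
  qed
  then show ?thesis by (simp add: DERIV_def LIM_zero_iff)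
qed



lemma Fq_II: "Fq (Suc k) y = II k y"
  unfolding Fq_def II_def fI_def[abs_def] by simp

lemma II_lower: "II (Suc k) y \<ge> y * II k y"
proof (cases k)
  case 0 then show ?thesis using II_recur0[of y] by simp
next
  case (Suc m) then show ?thesis using II_recur[of m y] II_nonneg[of m y] by simp
qed

lemma II_CS: "(II (Suc k) y)\<^sup>2 \<le> II (Suc (Suc k)) y * II k y"
proof -
  define m where "m = II (Suc k) y / II k y"
  have pos: "II k y > 0" by (rule II_pos)
  have pw: "fI k y u * (u - m)\<^sup>2 = fI (Suc (Suc k)) y u - 2 * m * fI (Suc k) y u + m\<^sup>2 * fI k y u" for u
    unfolding fI_def by (simp add: power2_eq_square algebra_simps)
  have int: "(\<lambda>u. fI k y u * (u - m)\<^sup>2) integrable_on {0..}"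
    unfolding pw by (intro integrable_diff integrable_add integrable_on_mult_right fI_integrable)
  have "0 \<le> integral {0..} (\<lambda>u. fI k y u * (u - m)\<^sup>2)"
    by (rule integral_nonneg[OF int]) (simp add: fI_nonneg)
  also have "\<dots> = II (Suc (Suc k)) y - 2 * m * II (Suc k) y + m\<^sup>2 * II k y"
  proof -
    have a: "integral {0..} (\<lambda>u. fI (Suc (Suc k)) y u - 2 * m * fI (Suc k) y u)
        = II (Suc (Suc k)) y - 2 * m * II (Suc k) y"
      unfolding II_def by (subst integral_diff) (auto intro!: integrable_on_mult_right fI_integrable)
    have b: "integral {0..} (\<lambda>u. (fI (Suc (Suc k)) y u - 2 * m * fI (Suc k) y u) + m\<^sup>2 * fI k y u)
        = integral {0..} (\<lambda>u. fI (Suc (Suc k)) y u - 2 * m * fI (Suc k) y u) + m\<^sup>2 * II k y"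
      unfolding II_def by (subst integral_add) (auto intro!: integrable_diff integrable_on_mult_right fI_integrable)
    show ?thesis unfolding pw using a b by simp
  qed
  also have "\<dots> = II (Suc (Suc k)) y - (II (Suc k) y)\<^sup>2 / II k y"
    using pos by (simp add: m_def field_simps power2_eq_square)
  finally have "(II (Suc k) y)\<^sup>2 / II k y \<le> II (Suc (Suc k)) y" by simp
  then show ?thesis using pos by (simp add: divide_le_eq)
qed

definition psi :: "nat \<Rightarrow> real \<Rightarrow> real" where
  "psi k B = B * II (Suc k) B / II k B"

lemma psi_deriv:
  "(psi k has_real_derivative
     ((1 * II (Suc k) x + II (Suc (Suc k)) x * x) * II k x - x * II (Suc k) x * II (Suc k) x)
       / (II k x * II k x)) (at x)"
  unfolding psi_def
  by (rule DERIV_divide[OF DERIV_mult[OF DERIV_ident II_deriv] II_deriv])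
     (use II_pos[of k x] in simp)

lemma psi_cont: "continuous_on S (psi k)"
  using psi_deriv DERIV_isCont continuous_at_imp_continuous_on by blast

lemma psi_strict_mono:
  assumes "0 \<le> a" "a < b" shows "psi k a < psi k b"
proof (rule DERIV_pos_imp_increasing[OF assms(2)])
  fix x assume x: "a \<le> x" "x \<le> b"
  then have x0: "x \<ge> 0" using assms by simp
  have p: "II k x > 0" "II (Suc k) x > 0" by (rule II_pos)+
  have "x * (II (Suc k) x)\<^sup>2 \<le> x * (II (Suc (Suc k)) x * II k x)"
    by (rule mult_left_mono[OF II_CS x0])
  then have "0 < ((1 * II (Suc k) x + II (Suc (Suc k)) x * x) * II k x - x * II (Suc k) x * II (Suc k) x)"
  proof -
    have pp: "0 < II (Suc k) x * II k x" using p by simp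
    have "((1 * II (Suc k) x + II (Suc (Suc k)) x * x) * II k x - x * II (Suc k) x * II (Suc k) x)
       = II (Suc k) x * II k x + (x * (II (Suc (Suc k)) x * II k x) - x * (II (Suc k) x)\<^sup>2)"
      by (simp add: algebra_simps power2_eq_square)
    then show ?thesis using pp \<open>x * (II (Suc k) x)\<^sup>2 \<le> x * (II (Suc (Suc k)) x * II k x)\<close> by linarith
  qed
  then have "0 < ((1 * II (Suc k) x + II (Suc (Suc k)) x * x) * II k x - x * II (Suc k) x * II (Suc k) x)
       / (II k x * II k x)" using p by simp
  then show "\<exists>y. DERIV (psi k) x :> y \<and> y > 0" using psi_deriv by blast
qed

lemma Bstar_cond_iff:
  "B > 0 \<and> real (2*n+1) - B * deriv (Fq (2*n+1)) B / Fq (2*n+1) B = 0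
   \<longleftrightarrow> B > 0 \<and> psi (2*n) B = real (2*n+1)"
proof -
  have "deriv (Fq (2*n+1)) B = II (Suc (2*n)) B"
  proof (rule DERIV_imp_deriv)
    have e: "Fq (2*n+1) = II (2*n)" using Fq_II[of "2*n"] by (simp add: fun_eq_iff)
    show "(Fq (2*n+1) has_real_derivative II (Suc (2*n)) B) (at B)" unfolding e by (rule II_deriv)
  qed
  moreover have "Fq (2*n+1) B = II (2*n) B" using Fq_II[of "2*n"] by simp
  ultimately show ?thesis by (auto simp: psi_def)
qed

lemma Bstar_exists_unique: "\<exists>!B. B > 0 \<and> psi (2*n) B = real (2*n+1)"
proof -
  let ?q = "real (2*n+1)"
  have "psi (2*n) 0 \<le> ?q" by (simp add: psi_def)
  moreover have "?q \<le> psi (2*n) (sqrt ?q)"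
  proof -
    have p: "II (2*n) (sqrt ?q) > 0" by (rule II_pos)
    have "sqrt ?q * II (2*n) (sqrt ?q) \<le> II (Suc (2*n)) (sqrt ?q)" by (rule II_lower)
    then have "sqrt ?q * (sqrt ?q * II (2*n) (sqrt ?q)) \<le> sqrt ?q * II (Suc (2*n)) (sqrt ?q)"
      by (rule mult_left_mono) simp
    then have "?q * II (2*n) (sqrt ?q) \<le> sqrt ?q * II (Suc (2*n)) (sqrt ?q)"
      by (simp add: mult.assoc[symmetric] del: of_nat_add of_nat_mult)
    then show ?thesis using p unfolding psi_def by (simp add: le_divide_eq del: of_nat_add of_nat_mult)
  qed
  ultimately obtain B where B: "0 \<le> B" "B \<le> sqrt ?q" "psi (2*n) B = ?q"
    using IVT'[of "psi (2*n)" 0 ?q "sqrt ?q"] psi_cont by auto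
  have "B \<noteq> 0" using B(3) by (auto simp: psi_def)
  with B have ex: "B > 0 \<and> psi (2*n) B = ?q" by simp
  show ?thesis
  proof (rule ex1I[of _ B])
    show "B > 0 \<and> psi (2*n) B = ?q" by (rule ex)
  next
    fix C assume C: "C > 0 \<and> psi (2*n) C = ?q"
    show "C = B"
    proof (rule ccontr)
      assume "C \<noteq> B"
      then have "C < B \<or> B < C" by auto
      then show False using psi_strict_mono[of C B "2*n"] psi_strict_mono[of B C "2*n"] C ex by auto
    qed
  qed
qed

lemma Bstar_props: "Bstar n > 0" "psi (2*n) (Bstar n) = real (2*n+1)"
proof -
  have "Bstar n > 0 \<and> psi (2*n) (Bstar n) = real (2*n+1)"
    unfolding Bstar_def Bstar_cond_iff
    by (rule theI'[OF Bstar_exists_unique])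
  then show "Bstar n > 0" "psi (2*n) (Bstar n) = real (2*n+1)" by auto
qed

lemma Bstar_sq: "(Bstar n)\<^sup>2 \<ge> real n + 1/2"
proof -
  let ?B = "Bstar n" and ?q = "real (2*n+1)"
  define a where "a = II (2*n) ?B"
  define b where "b = II (Suc (2*n)) ?B"
  have a: "a > 0" unfolding a_def by (rule II_pos)
  have B: "?B > 0" by (rule Bstar_props)
  have hb: "?B * b = ?q * a" using Bstar_props(2)[of n] a unfolding psi_def a_def b_def
    by (simp add: divide_eq_eq del: of_nat_add of_nat_mult)
  have c: "II (Suc (Suc (2*n))) ?B = 2 * ?q * a"
    using II_recur[of "2*n" ?B] hb unfolding a_def b_def by simp
  have "b\<^sup>2 \<le> 2 * ?q * a * a" using II_CS[of "2*n" ?B] c unfolding b_def a_def by simp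
  then have "(?B * b)\<^sup>2 \<le> ?B\<^sup>2 * (2 * ?q * a * a)"
    by (simp add: power_mult_distrib mult_left_mono)
  then have "?q\<^sup>2 * a\<^sup>2 \<le> ?B\<^sup>2 * 2 * ?q * a\<^sup>2" unfolding hb by (simp add: power_mult_distrib power2_eq_square algebra_simps)
  then have "?q * (?q * a\<^sup>2) \<le> ?q * (?B\<^sup>2 * 2 * a\<^sup>2)" by (simp add: power2_eq_square algebra_simps)
  then have "?q * a\<^sup>2 \<le> ?B\<^sup>2 * 2 * a\<^sup>2" by (rule mult_left_le_imp_le) simp
  then have "?q \<le> ?B\<^sup>2 * 2" using a by simp
  then show ?thesis by simp
qed



lemma powr_half_sqrt_pow:
  assumes "u > 0" shows "u powr (real n + 1/2) = sqrt u ^ (2*n+1)"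
proof -
  have "u powr (real n + 1/2) = u powr real n * u powr (1/2)" using assms by (simp add: powr_add)
  also have "\<dots> = u ^ n * sqrt u" using assms by (simp add: powr_realpow powr_half_sqrt)
  also have "\<dots> = sqrt u ^ (2*n+1)"
    using assms by (simp add: power_mult real_sqrt_pow2 power_add)
  finally show ?thesis .
qed

lemma Lop_formula:
  fixes \<xi> :: "real \<Rightarrow> real \<Rightarrow> real" and \<Phi> \<Psi> \<Theta> :: "real \<Rightarrow> real" and S :: "(real \<times> real) set"
  assumes d1: "\<And>z. (\<Phi> has_real_derivative \<Psi> z) (at z)"
    and d2: "\<And>z. (\<Psi> has_real_derivative \<Theta> z) (at z)"
    and ode: "\<And>z. \<Theta> z = z * \<Psi> z + real (2*n+1) * \<Phi> z"
    and S: "open S" "(t,x) \<in> S"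
    and eq: "\<And>s y. (s,y) \<in> S \<Longrightarrow> s < 1 \<and>
         \<xi> s y = (1-s) powr (real n + 1/2) * \<Phi> (y / sqrt (1-s)) + \<kappa> * y^(2*n+1)"
  shows "Lop \<xi> t x = \<kappa> * (real (2*n+1) * real n * x^(2*n-1) - x * real (2*n+1) * x^(2*n) / (1-t))"
proof -
  define q where "q = 2*n+1"
  have t1: "t < 1" using eq[OF S(2)] by simp
  define r where "r = sqrt (1-t)"
  have r0: "r > 0" using t1 by (simp add: r_def)
  have r2: "1 - t = r^2" using t1 by (simp add: r_def)
  have eq2: "\<xi> s y = sqrt (1-s) ^ q * \<Phi> (y / sqrt (1-s)) + \<kappa> * y^q" if "(s,y) \<in> S" for s y
    using eq[OF that] by (simp add: powr_half_sqrt_pow q_def)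
  define r' where "r' = inverse r / 2 * (-1)"
  have dR: "((\<lambda>s. sqrt (1-s)) has_real_derivative r') (at t)"
    unfolding r'_def r_def
    by (rule DERIV_chain2[where f=sqrt and g="\<lambda>s. 1-s", OF DERIV_real_sqrt])
       (use t1 in \<open>auto intro!: derivative_eq_intros\<close>)
  have dP: "((\<lambda>s. sqrt (1-s) ^ q) has_real_derivative of_nat q * (r' * r ^ (q - Suc 0))) (at t)"
    unfolding r_def by (rule DERIV_power[OF dR])
  have dZ: "((\<lambda>s. x / sqrt (1-s)) has_real_derivative (0 * r - x * r') / (r * r)) (at t)"
    unfolding r_def by (rule DERIV_divide[OF DERIV_const dR]) (use t1 in simp)
  have dF: "((\<lambda>s. \<Phi> (x / sqrt (1-s))) has_real_derivative \<Psi> (x / r) * ((0 * r - x * r') / (r * r))) (at t)"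
    unfolding r_def by (rule DERIV_chain2[OF d1 dZ[unfolded r_def]])
  define TV where "TV = of_nat q * (r' * r ^ (q - Suc 0)) * \<Phi> (x / r) + \<Psi> (x / r) * ((0 * r - x * r') / (r * r)) * r ^ q + 0"
  have dT: "((\<lambda>s. sqrt (1-s) ^ q * \<Phi> (x / sqrt (1-s)) + \<kappa> * x^q) has_real_derivative TV) (at t)"
    unfolding TV_def using DERIV_add[OF DERIV_mult[OF dP dF] DERIV_const] by (simp add: r_def)
  have St: "open ((\<lambda>s. (s,x)) -` S)" by (rule continuous_open_vimage[OF S(1)]) (intro continuous_intros)
  have "((\<lambda>s. \<xi> s x) has_real_derivative TV) (at t)"
    by (rule has_field_derivative_transform_within_open[OF dT St]) (use S(2) eq2 in auto)
  then have DT: "deriv (\<lambda>s. \<xi> s x) t = TV" by (rule DERIV_imp_deriv)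
  define GX where "GX y = r ^ q * (\<Psi> (y / r) * (1 / r)) + \<kappa> * (real q * y ^ (q - Suc 0))" for y
  have dX: "((\<lambda>y. r ^ q * \<Phi> (y / r) + \<kappa> * y ^ q) has_real_derivative GX y) (at y)" for y
    unfolding GX_def
    by (intro DERIV_add DERIV_cmult DERIV_pow DERIV_chain2[OF d1] DERIV_cdivide DERIV_ident)
  have Sx: "open (Pair t -` S)" by (rule continuous_open_vimage[OF S(1)]) (intro continuous_intros)
  have DX: "deriv (\<lambda>y. \<xi> t y) y = GX y" if "y \<in> Pair t -` S" for y
  proof (rule DERIV_imp_deriv)
    show "((\<lambda>y. \<xi> t y) has_real_derivative GX y) (at y)"
      by (rule has_field_derivative_transform_within_open[OF dX Sx that]) (use eq2 r_def in auto)
  qed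
  define GXX where "GXX = r ^ q * (\<Theta> (x / r) * (1 / r) * (1 / r)) + \<kappa> * (real q * (of_nat (q - Suc 0) * (1 * x ^ (q - Suc 0 - Suc 0))))"
  have dXX: "(GX has_real_derivative GXX) (at x)"
    unfolding GX_def[abs_def] GXX_def
    by (intro DERIV_add DERIV_cmult DERIV_cmult_right DERIV_power DERIV_ident DERIV_chain2[OF d2] DERIV_cdivide)
  have "(deriv (\<lambda>y. \<xi> t y) has_real_derivative GXX) (at x)"
    by (rule has_field_derivative_transform_within_open[OF dXX Sx]) (use S(2) DX in auto)
  then have DXX: "deriv (deriv (\<lambda>y. \<xi> t y)) x = GXX" by (rule DERIV_imp_deriv)
  have DX0: "deriv (\<lambda>y. \<xi> t y) x = GX x" using DX S(2) by auto
  have "Lop \<xi> t x = TV - x / (1 - t) * GX x + 1/2 * GXX"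
    unfolding Lop_def DT DX0 DXX ..
  also have "\<dots> = \<kappa> * (real (2*n+1) * real n * x^(2*n-1) - x * real (2*n+1) * x^(2*n) / (1-t))"
  proof -
    have qq: "q - Suc 0 = 2*n" "q - Suc 0 - Suc 0 = 2*n - 1" by (auto simp: q_def)
    have rq: "r ^ q = r ^ (2*n) * r" by (simp add: q_def)
    have o: "\<Theta> (x / r) = (x / r) * \<Psi> (x / r) + real q * \<Phi> (x / r)" using ode by (simp add: q_def)
    show ?thesis
      unfolding TV_def GX_def GXX_def r'_def qq rq o r2 using r0
      by (simp add: field_simps q_def power2_eq_square)
  qed
  finally show ?thesis .
qed



lemma sq_bound:
  assumes "t < 1" "\<bar>x\<bar> > Bstar n * sqrt (1 - t)"
  shows "real n * (1 - t) \<le> x\<^sup>2"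
proof -
  have B: "Bstar n > 0" by (rule Bstar_props)
  have "0 \<le> Bstar n * sqrt (1 - t)" using B assms(1) by simp
  then have "(Bstar n * sqrt (1 - t))\<^sup>2 < \<bar>x\<bar>\<^sup>2" using assms(2) by (intro power_strict_mono) auto
  then have "(Bstar n)\<^sup>2 * (1 - t) < x\<^sup>2" using assms(1) by (simp add: power_mult_distrib)
  moreover have "real n * (1 - t) \<le> (Bstar n)\<^sup>2 * (1 - t)"
    using Bstar_sq[of n] assms(1) by (intro mult_right_mono) auto
  ultimately show ?thesis by linarith
qed

lemma ineq_main:
  assumes t: "t < 1" and x2: "real n * (1 - t) \<le> x\<^sup>2" and k: "\<kappa> * x > 0"
    and kk: "\<kappa> = 1 \<or> \<kappa> = -1"
  shows "\<kappa> * (real (2*n+1) * real n * x^(2*n-1) - x * real (2*n+1) * x^(2*n) / (1-t)) \<le> 0"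
proof (cases n)
  case 0
  then show ?thesis using k t by (simp add: mult_pos_pos field_simps)
next
  case (Suc m)
  define w where "w = x ^ (2*m+1)"
  have e1: "x^(2*n-1) = w" by (simp add: Suc w_def)
  have e2: "x * x^(2*n) = w * x\<^sup>2" by (simp add: Suc w_def power2_eq_square power_Suc[symmetric] del: power_Suc) (simp add: algebra_simps)
  have kw: "\<kappa> * w > 0"
  proof -
    have "w = x ^ (2*m) * x" by (simp add: w_def)
    moreover have "x ^ (2*m) > 0" using k by (simp add: power_mult zero_less_power_eq) (metis mult_zero_right less_irrefl)
    ultimately have "\<kappa> * w = (\<kappa> * x) * x ^ (2*m)" by simp
    then show ?thesis using k \<open>x ^ (2*m) > 0\<close> by (metis mult_pos_pos)
  qed
  have "real n \<le> x\<^sup>2 / (1 - t)" using x2 t by (simp add: le_divide_eq)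
  then have "\<kappa> * w * real n \<le> \<kappa> * w * (x\<^sup>2 / (1 - t))" using kw by (intro mult_left_mono) auto
  then have "\<kappa> * (real n * w - w * x\<^sup>2 / (1 - t)) \<le> 0" by (simp add: algebra_simps)
  then have "real (2*n+1) * (\<kappa> * (real n * w - w * x\<^sup>2 / (1 - t))) \<le> 0"
    by (simp add: mult_nonneg_nonpos)
  moreover have e3: "x^(2*n) = w * x" by (simp add: Suc w_def)
  moreover have "1 - t \<noteq> 0" using t by simp
  ultimately show ?thesis
    unfolding e1 e3 by (simp add: power2_eq_square field_simps)
qed

theorem lemma4p6:
  fixes n :: nat
  shows "(\<forall>t x. 0 \<le> t \<and> t < 1 \<and> \<bar>x\<bar> < Bstar n * sqrt (1 - t)
            \<longrightarrow> Lop (Jstar n) t x = 0)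
       \<and> (\<forall>t x. 0 \<le> t \<and> t < 1 \<and> \<bar>x\<bar> > Bstar n * sqrt (1 - t)
            \<longrightarrow> Lop (Jstar n) t x \<le> 0)"
proof (intro conjI allI impI)
  define B where "B = Bstar n"
  have B0: "B > 0" unfolding B_def by (rule Bstar_props)
  have F: "Fq (2*n+1) = II (2*n)" using Fq_II[of "2*n"] by (simp add: fun_eq_iff)
  have G: "Gq (2*n+1) w = II (2*n) (- w)" for w by (simp add: Gq_def Fq_II)
  have rec: "II (Suc (Suc (2*n))) z = z * II (Suc (2*n)) z + real (2*n+1) * II (2*n) z" for z
    using II_recur[of "2*n" z] by simp
  have dm: "((\<lambda>z::real. - z) has_real_derivative -1) (at z)" for z
    by (auto intro!: derivative_eq_intros)
  fix t x :: real
  assume a: "0 \<le> t \<and> t < 1 \<and> \<bar>x\<bar> < Bstar n * sqrt (1 - t)"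
  define c where "c = jfun n B"
  let ?S = "{p::real\<times>real. fst p < 1} \<inter> {p. \<bar>snd p\<bar> < B * sqrt (1 - fst p)}"
  have "Lop (Jstar n) t x = 0 * (real (2*n+1) * real n * x^(2*n-1) - x * real (2*n+1) * x^(2*n) / (1-t))"
  proof (rule Lop_formula[where \<Phi>="\<lambda>z. c * (II (2*n) z + II (2*n) (-z))"
        and \<Psi>="\<lambda>z. c * (II (Suc (2*n)) z + II (Suc (2*n)) (-z) * -1)"
        and \<Theta>="\<lambda>z. c * (II (Suc (Suc (2*n))) z + II (Suc (Suc (2*n))) (-z) * -1 * -1)" and S="?S"])
    show "((\<lambda>z. c * (II (2*n) z + II (2*n) (-z))) has_real_derivative c * (II (Suc (2*n)) z + II (Suc (2*n)) (-z) * -1)) (at z)" for z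
      by (intro DERIV_cmult DERIV_add II_deriv DERIV_chain2[OF II_deriv dm])
    show "((\<lambda>z. c * (II (Suc (2*n)) z + II (Suc (2*n)) (-z) * -1)) has_real_derivative c * (II (Suc (Suc (2*n))) z + II (Suc (Suc (2*n))) (-z) * -1 * -1)) (at z)" for z
      by (intro DERIV_cmult DERIV_add II_deriv DERIV_cmult_right DERIV_chain2[OF II_deriv dm])
    show "c * (II (Suc (Suc (2*n))) z + II (Suc (Suc (2*n))) (-z) * -1 * -1) = z * (c * (II (Suc (2*n)) z + II (Suc (2*n)) (-z) * -1)) + real (2*n+1) * (c * (II (2*n) z + II (2*n) (-z)))" for z
      by (simp only: rec) (simp add: algebra_simps)
    show "open ?S" by (intro open_Int open_Collect_less continuous_intros)
    show "(t, x) \<in> ?S" using a by (simp add: B_def)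
    show "s < 1 \<and> Jstar n s y = (1-s) powr (real n + 1/2) * (c * (II (2*n) (y / sqrt (1-s)) + II (2*n) (- (y / sqrt (1-s))))) + 0 * y^(2*n+1)"
      if "(s, y) \<in> ?S" for s y
      using that by (simp add: Jstar_def B_def[symmetric] Fq_II Gq_def c_def)
  qed
  then show "Lop (Jstar n) t x = 0" by simp
next
  define B where "B = Bstar n"
  have B0: "B > 0" unfolding B_def by (rule Bstar_props)
  have F: "Fq (2*n+1) = II (2*n)" using Fq_II[of "2*n"] by (simp add: fun_eq_iff)
  have rec: "II (Suc (Suc (2*n))) z = z * II (Suc (2*n)) z + real (2*n+1) * II (2*n) z" for z
    using II_recur[of "2*n" z] by simp
  have dm: "((\<lambda>z::real. - z) has_real_derivative -1) (at z)" for z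
    by (auto intro!: derivative_eq_intros)
  fix t x :: real
  assume a: "0 \<le> t \<and> t < 1 \<and> \<bar>x\<bar> > Bstar n * sqrt (1 - t)"
  have x2: "real n * (1 - t) \<le> x\<^sup>2" using sq_bound a by blast
  define c where "c = B ^ (2*n+1) / II (2*n) B"
  have r0: "0 \<le> B * sqrt (1 - t)" using B0 a by simp
  show "Lop (Jstar n) t x \<le> 0"
  proof (cases "x > 0")
    case True
    let ?S = "{p::real\<times>real. fst p < 1} \<inter> {p. B * sqrt (1 - fst p) < snd p}"
    have "Lop (Jstar n) t x = 1 * (real (2*n+1) * real n * x^(2*n-1) - x * real (2*n+1) * x^(2*n) / (1-t))"
    proof (rule Lop_formula[where \<Phi>="\<lambda>z. c * II (2*n) (-z)"
          and \<Psi>="\<lambda>z. c * (II (Suc (2*n)) (-z) * -1)"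
          and \<Theta>="\<lambda>z. c * (II (Suc (Suc (2*n))) (-z) * -1 * -1)" and S="?S"])
      show "((\<lambda>z. c * II (2*n) (-z)) has_real_derivative c * (II (Suc (2*n)) (-z) * -1)) (at z)" for z
        by (intro DERIV_cmult DERIV_chain2[OF II_deriv dm])
      show "((\<lambda>z. c * (II (Suc (2*n)) (-z) * -1)) has_real_derivative c * (II (Suc (Suc (2*n))) (-z) * -1 * -1)) (at z)" for z
        by (intro DERIV_cmult DERIV_cmult_right DERIV_chain2[OF II_deriv dm])
      show "c * (II (Suc (Suc (2*n))) (-z) * -1 * -1) = z * (c * (II (Suc (2*n)) (-z) * -1)) + real (2*n+1) * (c * II (2*n) (-z))" for z
        by (simp only: rec) (simp add: algebra_simps)
      show "open ?S" by (intro open_Int open_Collect_less continuous_intros)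
      show "(t, x) \<in> ?S" using a True by (simp add: B_def)
      show "s < 1 \<and> Jstar n s y = (1-s) powr (real n + 1/2) * (c * II (2*n) (- (y / sqrt (1-s)))) + 1 * y^(2*n+1)"
        if "(s, y) \<in> ?S" for s y
      proof -
        from that have s: "s < 1" and y: "B * sqrt (1 - s) < y" by auto
        have y0: "y > 0" using y B0 s by (smt (verit) mult_nonneg_nonneg real_sqrt_ge_zero)
        have "\<not> \<bar>y\<bar> < B * sqrt (1 - s)" using y y0 by simp
        moreover have "- y < B * sqrt (1 - s)"
        proof -
          have "0 \<le> B * sqrt (1 - s)" using B0 s by simp
          then show ?thesis using y0 by linarith
        qed
        ultimately show ?thesis using s y0
          by (simp add: Jstar_def gfun_def Ufun_def B_def[symmetric] Fq_II c_def)
      qed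
    qed
    also have "\<dots> \<le> 0" by (rule ineq_main) (use a x2 True in auto)
    finally show ?thesis .
  next
    case False
    then have xneg: "x < - (B * sqrt (1 - t))" using a r0 by (auto simp: B_def)
    let ?S = "{p::real\<times>real. fst p < 1} \<inter> {p. snd p < - (B * sqrt (1 - fst p))}"
    have "Lop (Jstar n) t x = (-1) * (real (2*n+1) * real n * x^(2*n-1) - x * real (2*n+1) * x^(2*n) / (1-t))"
    proof (rule Lop_formula[where \<Phi>="\<lambda>z. c * II (2*n) z"
          and \<Psi>="\<lambda>z. c * II (Suc (2*n)) z"
          and \<Theta>="\<lambda>z. c * II (Suc (Suc (2*n))) z" and S="?S"])
      show "((\<lambda>z. c * II (2*n) z) has_real_derivative c * II (Suc (2*n)) z) (at z)" for z
        by (intro DERIV_cmult II_deriv)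
      show "((\<lambda>z. c * II (Suc (2*n)) z) has_real_derivative c * II (Suc (Suc (2*n))) z) (at z)" for z
        by (intro DERIV_cmult II_deriv)
      show "c * II (Suc (Suc (2*n))) z = z * (c * II (Suc (2*n)) z) + real (2*n+1) * (c * II (2*n) z)" for z
        by (simp only: rec) (simp add: algebra_simps)
      show "open ?S" by (intro open_Int open_Collect_less continuous_intros)
      show "(t, x) \<in> ?S" using a xneg by simp
      show "s < 1 \<and> Jstar n s y = (1-s) powr (real n + 1/2) * (c * II (2*n) (y / sqrt (1-s))) + (-1) * y^(2*n+1)"
        if "(s, y) \<in> ?S" for s y
      proof -
        from that have s: "s < 1" and y: "y < - (B * sqrt (1 - s))" by auto
        have r: "0 \<le> B * sqrt (1 - s)" using B0 s by simp
        have y0: "y < 0" using y r by linarith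
        have "\<not> \<bar>y\<bar> < B * sqrt (1 - s)" using y y0 by simp
        moreover have "y < B * sqrt (1 - s)" using y r by linarith
        ultimately show ?thesis using s y0
          by (simp add: Jstar_def gfun_def Ufun_def B_def[symmetric] Fq_II c_def)
      qed
    qed
    also have "\<dots> \<le> 0" by (rule ineq_main) (use a x2 xneg r0 in auto)
    finally show ?thesis .
  qed
qed


end
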